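(* For $1<\alpha<\infty$, the norm of the Ces\`aro operator on the $\alpha$-Bloch space satisfies $\|\mathcal{C}\|_{\mathcal{B}^\alpha\to\mathcal{B}^\alpha}\ge\frac32$.
   Context: $\mathbb{D}$ is the open unit disc and $H(\mathbb{D})$ the space of analytic functions on $\mathbb{D}$. For $f(z)=\sum_{k\ge0}a_kz^k\in H(\mathbb{D})$ the Ces\`aro operator is $\mathcal{C}(f)(z)=\sum_{n\ge0}\Big(\frac{1}{n+1}\sum_{k=0}^n a_k\Big)z^n=\int_0^1\frac{f(tz)}{1-tz}\,dt$. For $\alpha>0$ the $\alpha$-Bloch space $\mathcal{B}^\alpha$ consists of $f\in H(\mathbb{D})$ with $\sup_{z\in\mathbb{D}}(1-|z|^2)^\alpha|f'(z)|<\infty$, normed by $\|f\|_{\mathcal{B}^\alpha}=|f(0)|+\sup_{z\in\mathbb{D}}(1-|z|^2)^\alpha|f'(z)|$. Operator norms are $\|\mathcal{C}\|_{X\to Y}=\sup\{\|\mathcal{C}f\|_Y:\|f\|_X\le 1\}$. *)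

theory Defs
  imports "HOL-Analysis.Analysis"
begin

text \<open>Cesaro operator via its integral representation
  C(f)(z) = int_0^1 f(tz)/(1 - tz) dt, for f analytic on the unit disc.\<close>
definition cesaro :: "(complex \<Rightarrow> complex) \<Rightarrow> complex \<Rightarrow> complex" where
  "cesaro f = (\<lambda>z. integral {0..1::real}
       (\<lambda>t. f (of_real t * z) / (1 - of_real t * z)))"

text \<open>alpha-Bloch norm, extended-real valued (infinite iff f is not in the space).\<close>
definition bloch_norm :: "real \<Rightarrow> (complex \<Rightarrow> complex) \<Rightarrow> ereal" where
  "bloch_norm \<alpha> f = ereal (norm (f 0)) +
     (SUP z\<in>ball 0 1. ereal ((1 - (norm z)\<^sup>2) powr \<alpha> * norm (deriv f z)))"

definition bloch_space :: "real \<Rightarrow> (complex \<Rightarrow> complex) set" where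
  "bloch_space \<alpha> = {f. f holomorphic_on ball 0 1 \<and> bloch_norm \<alpha> f < \<infinity>}"

definition cesaro_bloch_opnorm :: "real \<Rightarrow> ereal" where
  "cesaro_bloch_opnorm \<alpha> =
     (SUP f\<in>{f\<in>bloch_space \<alpha>. bloch_norm \<alpha> f \<le> 1}. bloch_norm \<alpha> (cesaro f))"

end

theory Submission
  imports Defs
begin

definition gC :: "complex \<Rightarrow> complex" where
  "gC = (\<lambda>z. integral (cbox 0 (1::real)) (\<lambda>t. 1 / (1 - of_real t * z)))"

lemma cesaro_one: "cesaro (\<lambda>_. 1) = gC"
  by (simp add: cesaro_def gC_def)

lemma den_nz: "(z::complex) \<in> ball 0 (1/2) \<Longrightarrow> t \<in> cbox 0 (1::real) \<Longrightarrow> 1 - of_real t * z \<noteq> 0"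
proof
  assume z: "z \<in> ball 0 (1/2)" and t: "t \<in> cbox 0 (1::real)" and e: "1 - of_real t * z = 0"
  have "norm (of_real t * z) \<le> norm z" using t by (auto simp: norm_mult intro: mult_left_le_one_le)
  also have "\<dots> < 1" using z by auto
  finally have "norm (of_real t * z) < 1" .
  moreover have "of_real t * z = 1" using e by simp
  ultimately show False by simp
qed

lemma den_nz2: "(z::complex) \<in> ball 0 (1/2) \<Longrightarrow> t \<in> {0..(1::real)} \<Longrightarrow> of_real t * z \<noteq> 1"
  using den_nz[of z t] by auto

lemma gC_deriv: "(gC has_field_derivative 1/2) (at 0)"
proof -
  have "((\<lambda>z::complex. integral (cbox 0 (1::real)) (\<lambda>t. 1 / (1 - of_real t * z))) has_field_derivative
        integral (cbox 0 (1::real)) (\<lambda>t. of_real t / (1 - of_real t * 0)^2)) (at 0 within ball 0 (1/2))"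
  proof (rule leibniz_rule_field_derivative[where fx="\<lambda>(x::complex) (t::real). of_real t / (1 - of_real t * x)^2" and f = "\<lambda>(z::complex) (t::real). 1/(1 - of_real t * z)"])
    fix x :: complex and t :: real
    assume x: "x \<in> ball 0 (1/2)" and t: "t \<in> cbox 0 1"
    have nz: "1 - of_real t * x \<noteq> 0" using den_nz[OF x t] .
    have nz2: "of_real t * x \<noteq> 1" using nz by auto
    show "((\<lambda>x. 1 / (1 - of_real t * x)) has_field_derivative of_real t / (1 - of_real t * x)^2)
          (at x within ball 0 (1/2))"
      by (auto intro!: derivative_eq_intros simp: nz nz2 power2_eq_square)
  next
    fix x :: complex
    assume x: "x \<in> ball 0 (1/2)"
    have "continuous_on (cbox 0 1) (\<lambda>t::real. 1 / (1 - of_real t * x))"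
      by (intro continuous_intros) (use den_nz[OF x] in auto)
    then show "(\<lambda>t. 1 / (1 - of_real t * x)) integrable_on cbox 0 1"
      by (rule integrable_continuous)
  next
    show "continuous_on (ball 0 (1/2) \<times> cbox 0 1) (\<lambda>(x::complex, t::real). of_real t / (1 - of_real t * x)^2)"
      unfolding case_prod_beta
      by (intro continuous_intros) (use den_nz2 in auto)
  qed auto
  note D = this
  have I: "integral (cbox 0 1) (\<lambda>t::real. of_real t / (1 - of_real t * (0::complex))^2) = (1/2::complex)"
  proof -
    have "((\<lambda>t::real. t) has_integral (1/2)) {0..1}"
    proof -
      have "\<And>x. x \<in> {0..1::real} \<Longrightarrow> ((\<lambda>t. t^2/2) has_real_derivative x) (at x within {0..1})"
        by (auto intro!: derivative_eq_intros)
      then have "((\<lambda>t. t) has_integral ((1::real)^2/2 - 0^2/2)) {0..1}"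
        by (intro fundamental_theorem_of_calculus) (auto simp: has_real_derivative_iff_has_vector_derivative)
      then show ?thesis by simp
    qed
    then have "((\<lambda>t::real. complex_of_real t) has_integral of_real (1/2)) {0..1}"
      by (rule has_integral_linear[OF _ bounded_linear_of_real, unfolded o_def])
    then show ?thesis by (simp add: integral_unique)
  qed
  have "(gC has_field_derivative 1/2) (at 0 within ball 0 (1/2))"
    using D[unfolded I] unfolding gC_def .
  moreover have "at (0::complex) within ball 0 (1/2) = at 0"
    by (rule at_within_open) auto
  ultimately show ?thesis
    by metis
qed

lemma deriv_gC: "deriv gC 0 = 1/2"
  using gC_deriv by (rule DERIV_imp_deriv)

lemma gC0: "gC 0 = 1"
  by (simp add: gC_def)

lemma one_in: "(\<lambda>_. 1) \<in> {f\<in>bloch_space \<alpha>. bloch_norm \<alpha> f \<le> 1}"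
proof -
  have ne: "ball (0::complex) 1 \<noteq> {}" by simp
  have "bloch_norm \<alpha> (\<lambda>_. 1) = ereal 1 + (SUP z\<in>ball (0::complex) 1. ereal 0)"
    unfolding bloch_norm_def by simp
  also have "\<dots> = 1" using ne by (simp add: one_ereal_def)
  finally have "bloch_norm \<alpha> (\<lambda>_. 1) = 1" .
  then show ?thesis by (simp add: bloch_space_def)
qed

lemma gC_norm: "ereal (3/2) \<le> bloch_norm \<alpha> gC"
proof -
  have "ereal ((1 - (norm (0::complex))\<^sup>2) powr \<alpha> * norm (deriv gC 0))
        \<le> (SUP z\<in>ball 0 1. ereal ((1 - (norm z)\<^sup>2) powr \<alpha> * norm (deriv gC z)))"
    by (rule SUP_upper) auto
  then have "ereal (1/2) \<le> (SUP z\<in>ball 0 1. ereal ((1 - (norm z)\<^sup>2) powr \<alpha> * norm (deriv gC z)))"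
    by (simp add: deriv_gC)
  then have "ereal 1 + ereal (1/2) \<le> bloch_norm \<alpha> gC"
    unfolding bloch_norm_def gC0 by (intro add_mono) auto
  moreover have "ereal 1 + ereal (1/2) = ereal (3/2)" by simp
  ultimately show ?thesis by simp
qed

theorem theorem6p3:
  fixes \<alpha> :: real
  assumes "1 < \<alpha>"
  shows "ereal (3/2) \<le> cesaro_bloch_opnorm \<alpha>"
proof -
  have "bloch_norm \<alpha> (cesaro (\<lambda>_. 1)) \<le> cesaro_bloch_opnorm \<alpha>"
    unfolding cesaro_bloch_opnorm_def by (rule SUP_upper[OF one_in])
  then have "bloch_norm \<alpha> gC \<le> cesaro_bloch_opnorm \<alpha>" by (simp only: cesaro_one)
  then show ?thesis by (rule order_trans[OF gC_norm])
qed

end
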